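(* Let $f$ and $m$ be natural numbers such that $\gcd(f,2m)=2$, $\gcd(f+2,2m)=2$, $f^2+f+1\equiv m \pmod{2m}$, and $m+3\le f\le 2m-4$. Then there exists a cyclic DCA$(4,2m+1;2m)$ satisfying P1 and P2.
   Context: Let $(G,+)$ be an abelian group of order $n$. A difference covering array DCA$(k,\eta;n)$ over $G$ is an $\eta\times k$ matrix $Q=[q(i,j)]$ (rows indexed $0,\dots,\eta-1$, columns $0,\dots,k-1$) with entries in $G$ such that for every pair of distinct columns $j,j'$ the multiset $\{q(i,j)-q(i,j') : 0\le i\le \eta-1\}$ contains every element of $G$ at least once. It is cyclic if $G=\mathbb{Z}_n$. A DCA$(k,n+1;n)$ is taken in normalized form: all entries of its last row (row $n$) and of its last column (column $k-1$) equal $0$. Such a DCA satisfies P1 if $0$ occurs at least twice in every column, and satisfies P2 if for all distinct columns $j,j'$ with $j\neq k-1\neq j'$, the set $\{q(i,j)-q(i,j') : 0\le i\le n-1\}$ equals $G\setminus\{0\}$. *)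

theory Defs
  imports Main
begin

text \<open>A (cyclic) difference covering array DCA(k, eta; n) over Z_n, represented as a
  function Q :: nat => nat => int (row index, column index) whose entries on
  rows 0..eta-1 and columns 0..k-1 are residues in {0..<n}; subtraction is taken mod n.\<close>

definition is_cyclic_DCA :: "nat \<Rightarrow> nat \<Rightarrow> nat \<Rightarrow> (nat \<Rightarrow> nat \<Rightarrow> int) \<Rightarrow> bool" where
  "is_cyclic_DCA k eta n Q \<longleftrightarrow>
     (\<forall>i<eta. \<forall>j<k. Q i j \<in> {0..<int n}) \<and>
     (\<forall>j<k. \<forall>j'<k. j \<noteq> j' \<longrightarrow>
        (\<forall>g\<in>{0..<int n}. \<exists>i<eta. (Q i j - Q i j') mod int n = g))"

definition DCA_normalized :: "nat \<Rightarrow> nat \<Rightarrow> (nat \<Rightarrow> nat \<Rightarrow> int) \<Rightarrow> bool" where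
  "DCA_normalized k n Q \<longleftrightarrow>
     (\<forall>j<k. Q n j = 0) \<and> (\<forall>i\<le>n. Q i (k - 1) = 0)"

definition DCA_P1 :: "nat \<Rightarrow> nat \<Rightarrow> (nat \<Rightarrow> nat \<Rightarrow> int) \<Rightarrow> bool" where
  "DCA_P1 k n Q \<longleftrightarrow> (\<forall>j<k. card {i. i \<le> n \<and> Q i j = 0} \<ge> 2)"

definition DCA_P2 :: "nat \<Rightarrow> nat \<Rightarrow> (nat \<Rightarrow> nat \<Rightarrow> int) \<Rightarrow> bool" where
  "DCA_P2 k n Q \<longleftrightarrow>
     (\<forall>j<k. \<forall>j'<k. j \<noteq> j' \<longrightarrow> j \<noteq> k - 1 \<longrightarrow> j' \<noteq> k - 1 \<longrightarrow>
        (\<lambda>i. (Q i j - Q i j') mod int n) ` {..<n} = {1..<int n})"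

end

theory Submission
  imports Defs "HOL-Number_Theory.Number_Theory"
begin


lemma lc1: "(m::int) dvd a \<Longrightarrow> c = p*a \<Longrightarrow> m dvd c" by simp
lemma lc2: "(m::int) dvd a \<Longrightarrow> m dvd b \<Longrightarrow> c = p*a + q*b \<Longrightarrow> m dvd c" by simp
lemma lc3: "(m::int) dvd a \<Longrightarrow> m dvd b \<Longrightarrow> m dvd d \<Longrightarrow> c = p*a + q*b + r*d \<Longrightarrow> m dvd c" by simp

lemma dvd_tr: "(m::int) dvd (a - b) \<Longrightarrow> m dvd (b - c) \<Longrightarrow> m dvd (a - c)"
proof -
  assume "m dvd (a - b)" "m dvd (b - c)"
  then have "m dvd ((a - b) + (b - c))" by (rule dvd_add)
  then show ?thesis by simp
qed

lemma dvd_neg2: "(m::int) dvd (a - b) \<Longrightarrow> m dvd (- a - - b)"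
proof -
  assume h: "m dvd (a - b)"
  have e: "- a - - b = (-1)*(a - b)" by simp
  show ?thesis unfolding e using h by (rule dvd_mult)
qed

lemma dvd_neg3: "(m::int) dvd (a - - b) \<Longrightarrow> m dvd (- a - b)"
proof -
  assume h: "m dvd (a - - b)"
  have e: "- a - b = (-1)*(a - - b)" by simp
  show ?thesis unfolding e using h by (rule dvd_mult)
qed

definition Pf :: "int \<Rightarrow> int \<Rightarrow> int" where
  "Pf m y = (if y mod m = 0 then 1 else (y mod m) mod 2)"

lemma Pf_cong: "m dvd (x - y) \<Longrightarrow> Pf m x = Pf m y"
  unfolding Pf_def by (metis mod_eq_dvd_iff)

lemma Pf_0: "Pf m 0 = 1" by (simp add: Pf_def)
lemma Pf_1: "m > 1 \<Longrightarrow> Pf m 1 = 1" by (simp add: Pf_def)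

lemma Pf_step:
  assumes "m > 1" "odd m" "\<not> m dvd y"
  shows "odd (Pf m y + Pf m (y+1))"
proof -
  have r0: "y mod m \<noteq> 0" using assms(3) by (simp add: dvd_eq_mod_eq_0)
  have r: "0 < y mod m" "y mod m < m" using assms(1) r0
    by (smt (verit) pos_mod_sign) (use assms(1) in simp)
  have e: "(y+1) mod m = (y mod m + 1) mod m" by (simp add: mod_add_left_eq)
  show ?thesis
  proof (cases "y mod m = m - 1")
    case True
    then have "(y+1) mod m = 0" using e by simp
    then show ?thesis using True assms(2) unfolding Pf_def using r0 by simp
  next
    case False
    then have "(y+1) mod m = y mod m + 1" using e r by simp
    then show ?thesis using r r0 unfolding Pf_def by simp
  qed
qed

lemma Pf_negw: assumes "0 < w" "w < m" "odd w" "odd m" shows "Pf m (-w) = 0"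
proof -
  have "(-w) mod m = m - w"
  proof -
    have "-w = (-1)*m + (m - w)" by simp
    then have "(-w) mod m = (m - w) mod m" by (metis mod_mult_self3 add.commute)
    then show ?thesis using assms mod_pos_pos_trivial[of "m-w" m] by simp
  qed
  then show ?thesis using assms unfolding Pf_def by simp
qed

definition enc :: "int \<Rightarrow> int \<Rightarrow> int \<Rightarrow> int" where
  "enc m a c = c mod m + m * ((a + c mod m) mod 2)"

lemma enc_range: "m > 0 \<Longrightarrow> 0 \<le> enc m a c \<and> enc m a c < 2*m"
proof -
  assume m: "m > 0"
  define r where "r = c mod m"
  define b where "b = (a + r) mod 2"
  have r: "0 \<le> r" "r < m" using m unfolding r_def by auto
  have "b = 0 \<or> b = 1" unfolding b_def by presburger
  then have "0 \<le> r + m*b \<and> r + m*b < 2*m" using r m by auto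
  then show ?thesis unfolding enc_def r_def b_def .
qed

lemma enc_modm: "m dvd (enc m a c - c)"
proof -
  have e: "enc m a c - c = (c mod m - c) + m * ((a + c mod m) mod 2)" unfolding enc_def by simp
  have "m dvd (c mod m - c)" by (simp add: mod_eq_dvd_iff[symmetric])
  then show ?thesis unfolding e by simp
qed

lemma enc_mod2: assumes "odd m" shows "2 dvd (enc m a c - a)"
proof -
  obtain q where q: "m = 2*q + 1" using assms by (metis oddE)
  define r where "r = c mod m"
  define b where "b = (a + r) mod 2"
  have bb: "b = (a + r) - 2*((a+r) div 2)" unfolding b_def by (simp add: minus_div_mult_eq_mod[symmetric])
  have "enc m a c - a = r + m*b - a" unfolding enc_def r_def b_def by simp
  also have "\<dots> = 2*(r - (a+r) div 2 + q*b)" using q bb by (simp add: algebra_simps)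
  finally show ?thesis by simp
qed

lemma crt:
  fixes m z g :: int
  assumes "odd m" "m > 0" "0 \<le> g" "g < 2*m" "m dvd (z - g)" "2 dvd (z - g)"
  shows "z mod (2*m) = g"
proof -
  have "coprime 2 m" using assms(1) by (simp add: coprime_left_2_iff_odd)
  then have "2*m dvd (z - g)" using assms(5,6) divides_mult by blast
  then have "z mod (2*m) = g mod (2*m)" by (simp add: mod_eq_dvd_iff)
  then show ?thesis using assms by simp
qed

lemma core_pair:
  fixes m :: int and N :: nat and D G A :: "nat \<Rightarrow> int"
  assumes m: "m > 1" "odd m" "int N = 2*m"
  and DG: "\<And>i. i<N \<Longrightarrow> m dvd (D i - G i)" and DA: "\<And>i. i<N \<Longrightarrow> 2 dvd (D i - A i)"
  and H1: "\<And>u. \<exists>i0<N. \<exists>i1<N. m dvd (G i0 - u) \<and> m dvd (G i1 - u) \<and> (\<not> m dvd u \<longrightarrow> odd (A i0 - A i1))"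
  and H2: "\<And>i. i<N \<Longrightarrow> m dvd G i \<Longrightarrow> odd (A i)"
  shows "(\<lambda>i. D i mod (2*m)) ` {..<N} = {1..<2*m}"
proof
  show "(\<lambda>i. D i mod (2*m)) ` {..<N} \<subseteq> {1..<2*m}"
  proof
    fix x assume "x \<in> (\<lambda>i. D i mod (2*m)) ` {..<N}"
    then obtain i where i: "i < N" "x = D i mod (2*m)" by auto
    have x: "0 \<le> x" "x < 2*m" using i m by auto
    have "x \<noteq> 0"
    proof
      assume "x = 0"
      then have "2*m dvd D i" using i by (simp add: dvd_eq_mod_eq_0)
      then have d1: "m dvd D i" "2 dvd D i" by (auto intro: dvd_mult_left dvd_mult_right)
      have "m dvd (D i - (D i - G i))" using d1(1) DG[OF i(1)] by (rule dvd_diff)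
      then have "m dvd G i" by simp
      then have "odd (A i)" using H2 i by blast
      moreover have "2 dvd (D i - (D i - A i))" using d1(2) DA[OF i(1)] by (rule dvd_diff)
      then have "2 dvd A i" by simp
      ultimately show False by simp
    qed
    then show "x \<in> {1..<2*m}" using x by auto
  qed
next
  show "{1..<2*m} \<subseteq> (\<lambda>i. D i mod (2*m)) ` {..<N}"
  proof
    fix g assume g: "g \<in> {1..<2*m}"
    obtain i0 i1 where ii: "i0 < N" "i1 < N" "m dvd (G i0 - g)" "m dvd (G i1 - g)"
      "\<not> m dvd g \<longrightarrow> odd (A i0 - A i1)" using H1[of g] by blast
    have mg0: "m dvd (D i0 - g)" using DG[OF ii(1)] ii(3) by (rule dvd_tr)
    have mg1: "m dvd (D i1 - g)" using DG[OF ii(2)] ii(4) by (rule dvd_tr)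
    show "g \<in> (\<lambda>i. D i mod (2*m)) ` {..<N}"
    proof (cases "m dvd g")
      case True
      then obtain k where k: "g = m*k" by auto
      have "k = 1"
      proof -
        have a: "0 < m*k" using g k by simp
        have b: "m*k < m*2" using g k by (simp add: mult.commute)
        have "0 < k" using a m by (simp add: zero_less_mult_iff)
        moreover have "k < 2" using b m mult_less_cancel_left_pos[of m k 2] by simp
        ultimately show ?thesis by simp
      qed
      then have gm: "g = m" using k by simp
      have "m dvd (G i0 - g + g)" using ii(3) True by (rule dvd_add)
      then have "m dvd G i0" by simp
      then have "odd (A i0)" using H2 ii(1) by blast
      then have "2 dvd (D i0 - g)" using DA[OF ii(1)] gm m(2) by presburger
      then have "D i0 mod (2*m) = g" using crt[OF m(2) _ _ _ mg0] g m by auto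
      then show ?thesis using ii(1) by force
    next
      case False
      then have od: "odd (A i0 - A i1)" using ii(5) by blast
      show ?thesis
      proof (cases "2 dvd (A i0 - g)")
        case True
        then have "2 dvd (D i0 - g)" using DA[OF ii(1)] by presburger
        then have "D i0 mod (2*m) = g" using crt[OF m(2) _ _ _ mg0] g m by auto
        then show ?thesis using ii(1) by force
      next
        case False
        then have "2 dvd (D i1 - g)" using DA[OF ii(2)] od by presburger
        then have "D i1 mod (2*m) = g" using crt[OF m(2) _ _ _ mg1] g m by auto
        then show ?thesis using ii(2) by force
      qed
    qed
  qed
qed

lemma core_pair_neg:
  fixes m :: int and N :: nat and D G A :: "nat \<Rightarrow> int"
  assumes m: "m > 1" "odd m" "int N = 2*m"
  and DG: "\<And>i. i<N \<Longrightarrow> m dvd (D i - G i)" and DA: "\<And>i. i<N \<Longrightarrow> 2 dvd (D i - A i)"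
  and H1: "\<And>u. \<exists>i0<N. \<exists>i1<N. m dvd (G i0 - u) \<and> m dvd (G i1 - u) \<and> (\<not> m dvd u \<longrightarrow> odd (A i0 - A i1))"
  and H2: "\<And>i. i<N \<Longrightarrow> m dvd G i \<Longrightarrow> odd (A i)"
  shows "(\<lambda>i. (- D i) mod (2*m)) ` {..<N} = {1..<2*m}"
proof (rule core_pair[OF m, where G="\<lambda>i. - G i" and A="\<lambda>i. - A i"])
  fix i assume i: "i < N"
  show "m dvd (- D i - - G i)" using DG[OF i] by (rule dvd_neg2)
  show "2 dvd (- D i - - A i)" using DA[OF i] by (rule dvd_neg2)
  assume "m dvd - G i" then show "odd (- A i)" using H2[OF i] by simp
next
  fix u
  obtain i0 i1 where ii: "i0 < N" "i1 < N" "m dvd (G i0 - - u)" "m dvd (G i1 - - u)"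
      "\<not> m dvd (-u) \<longrightarrow> odd (A i0 - A i1)" using H1[of "-u"] by blast
  have "m dvd (- G i0 - u)" using ii(3) by (rule dvd_neg3)
  moreover have "m dvd (- G i1 - u)" using ii(4) by (rule dvd_neg3)
  moreover have "\<not> m dvd u \<longrightarrow> odd (- A i0 - - A i1)" using ii(5) by auto
  ultimately show "\<exists>i0<N. \<exists>i1<N. m dvd (- G i0 - u) \<and> m dvd (- G i1 - u) \<and> (\<not> m dvd u \<longrightarrow> odd (- A i0 - - A i1))"
    using ii(1,2) by blast
qed

lemma core_full:
  fixes m :: int and N :: nat and D G A :: "nat \<Rightarrow> int"
  assumes m: "m > 1" "odd m" "int N = 2*m"
  and DG: "\<And>i. i<N \<Longrightarrow> m dvd (D i - G i)" and DA: "\<And>i. i<N \<Longrightarrow> 2 dvd (D i - A i)"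
  and H1: "\<And>u. \<exists>i0<N. \<exists>i1<N. m dvd (G i0 - u) \<and> m dvd (G i1 - u) \<and> odd (A i0 - A i1)"
  and g: "0 \<le> g" "g < 2*m"
  shows "\<exists>i<N. D i mod (2*m) = g \<and> (- D i) mod (2*m) = (- g) mod (2*m)"
proof -
  obtain i0 i1 where ii: "i0 < N" "i1 < N" "m dvd (G i0 - g)" "m dvd (G i1 - g)"
      "odd (A i0 - A i1)" using H1[of g] by blast
  have mg0: "m dvd (D i0 - g)" using DG[OF ii(1)] ii(3) by (rule dvd_tr)
  have mg1: "m dvd (D i1 - g)" using DG[OF ii(2)] ii(4) by (rule dvd_tr)
  have neg: "\<And>i. D i mod (2*m) = g \<Longrightarrow> (- D i) mod (2*m) = (- g) mod (2*m)"
    by (metis mod_minus_eq)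
  show ?thesis
  proof (cases "2 dvd (A i0 - g)")
    case True
    then have "2 dvd (D i0 - g)" using DA[OF ii(1)] by presburger
    then have "D i0 mod (2*m) = g" using crt[OF m(2) _ g mg0] m by auto
    then show ?thesis using ii(1) neg by blast
  next
    case False
    then have "2 dvd (D i1 - g)" using DA[OF ii(2)] ii(5) by presburger
    then have "D i1 mod (2*m) = g" using crt[OF m(2) _ g mg1] m by auto
    then show ?thesis using ii(2) neg by blast
  qed
qed

lemma row:
  fixes m :: nat and s x :: int
  assumes "m > 0" "s = 0 \<or> s = 1"
  shows "\<exists>i<2*m. int (i div m) = s \<and> int m dvd (int (i mod m) - x)"
proof -
  define r where "r = nat (x mod int m)"
  have xm: "0 \<le> x mod int m" "x mod int m < int m" using assms(1) by auto
  have r: "r < m" "int r = x mod int m" using xm unfolding r_def by (simp_all add: nat_less_iff)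
  define i where "i = nat s * m + r"
  have "i div m = nat s" "i mod m = r" unfolding i_def using r(1) by auto
  moreover have "i < 2*m" unfolding i_def using assms(2) r(1) by auto
  moreover have "int m dvd (x mod int m - x)" by (simp add: mod_eq_dvd_iff[symmetric])
  ultimately show ?thesis using r(2) assms(2) by (intro exI[of _ i]) auto
qed

lemma solve:
  fixes a m u :: int
  assumes "coprime a m"
  shows "\<exists>z. m dvd (a*z - u)"
proof -
  obtain x where "[a*x = 1] (mod m)" using cong_solve_coprime_int assms by blast
  then have "[a*x*u = 1*u] (mod m)" by (rule cong_scalar_right)
  then show ?thesis by (metis cong_iff_dvd_diff mult.assoc mult_1)
qed



lemma dvd_both: "(M::int) dvd (a - u) \<Longrightarrow> M dvd (b - u) \<Longrightarrow> M dvd (a - b)"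
proof -
  assume "M dvd (a - u)" "M dvd (b - u)"
  then have "M dvd ((a - u) - (b - u))" by (rule dvd_diff)
  then show ?thesis by simp
qed

definition gg :: "int \<Rightarrow> nat \<Rightarrow> int \<Rightarrow> int \<Rightarrow> int" where
  "gg w j s t = (if j = 0 then t else if j = 1 then w*t + (1-w)*s else w^2*t + (1-w)*(1-s))"
definition aa :: "int \<Rightarrow> int \<Rightarrow> nat \<Rightarrow> int \<Rightarrow> int \<Rightarrow> int" where
  "aa M w j s t = (if j = 0 then s else if j = 1 then s + Pf M (gg w 1 s t) else s + Pf M (w^2 * gg w 2 s t + 1))"

definition QQ :: "nat \<Rightarrow> int \<Rightarrow> nat \<Rightarrow> nat \<Rightarrow> int" where
  "QQ m w i j = (if i < 2*m \<and> j < 3 then enc (int m) (aa (int m) w j (int (i div m)) (int (i mod m))) (gg w j (int (i div m)) (int (i mod m))) else 0)"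

locale ctx =
  fixes m :: nat and w :: int
  assumes m1: "int m > 1" and modd: "odd (int m)" and E: "int m dvd (w^2+w+1)"
  and cop: "coprime (1-w) (int m)" and wodd: "odd w" and w0: "0 < w" and wm: "w < int m"
begin

definition GG where "GG j k i = gg w j (int (i div m)) (int (i mod m)) - gg w k (int (i div m)) (int (i mod m))"
definition AA where "AA j k i = aa (int m) w j (int (i div m)) (int (i mod m)) - aa (int m) w k (int (i div m)) (int (i mod m))"

lemma mpos: "m > 0" using m1 by simp
lemma cop': "coprime (int m) (1-w)" using cop by (simp add: coprime_commute)

lemma S01: "i < 2*m \<Longrightarrow> int (i div m) = 0 \<or> int (i div m) = 1"
proof -
  assume "i < 2*m"
  then have "i div m < 2" using mpos by (simp add: div_less_iff_less_mult mult.commute)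
  then show ?thesis by auto
qed

lemma Pfs: "s = 0 \<or> s = 1 \<Longrightarrow> Pf (int m) s = 1" using Pf_0 Pf_1[OF m1] by auto

lemma H1_01: "\<exists>i0<2*m. \<exists>i1<2*m. int m dvd (GG 0 1 i0 - u) \<and> int m dvd (GG 0 1 i1 - u) \<and> (\<not> int m dvd u \<longrightarrow> odd (AA 0 1 i0 - AA 0 1 i1))"
proof -
  obtain z where z: "int m dvd ((1-w)*z - u)" using solve[OF cop] by blast
  obtain i0 where i0: "i0 < 2*m" "int (i0 div m) = 0" "int m dvd (int (i0 mod m) - z)" using row[of m 0 z] mpos by auto
  obtain i1 where i1: "i1 < 2*m" "int (i1 div m) = 1" "int m dvd (int (i1 mod m) - (z+1))" using row[of m 1 "z+1"] mpos by auto
  define t0 where "t0 = int (i0 mod m)"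
  define t1 where "t1 = int (i1 mod m)"
  have G0: "GG 0 1 i0 = t0 - w*t0" unfolding GG_def gg_def using i0 by (simp add: t0_def)
  have G1: "GG 0 1 i1 = t1 - (w*t1 + (1-w))" unfolding GG_def gg_def using i1 by (simp add: t1_def)
  have A0: "AA 0 1 i0 = - Pf (int m) (w*t0)" unfolding AA_def aa_def gg_def using i0 by (simp add: t0_def)
  have A1: "AA 0 1 i1 = - Pf (int m) (w*t1 + (1-w))" unfolding AA_def aa_def gg_def using i1 by (simp add: t1_def)
  have d0: "int m dvd (GG 0 1 i0 - u)" unfolding G0
    by (rule lc2[OF i0(3)[folded t0_def] z, where p="1-w" and q=1]) (simp add: algebra_simps eval_nat_numeral)
  have d1: "int m dvd (GG 0 1 i1 - u)" unfolding G1
    by (rule lc2[OF i1(3)[folded t1_def] z, where p="1-w" and q=1]) (simp add: algebra_simps eval_nat_numeral)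
  have P0: "Pf (int m) (w*t0) = Pf (int m) (w*z)"
    by (rule Pf_cong, rule lc1[OF i0(3)[folded t0_def], where p=w]) (simp add: algebra_simps eval_nat_numeral)
  have P1: "Pf (int m) (w*t1 + (1-w)) = Pf (int m) (w*z + 1)"
    by (rule Pf_cong, rule lc1[OF i1(3)[folded t1_def], where p=w]) (simp add: algebra_simps eval_nat_numeral)
  have "\<not> int m dvd u \<longrightarrow> odd (AA 0 1 i0 - AA 0 1 i1)"
  proof
    assume nu: "\<not> int m dvd u"
    have nd: "\<not> int m dvd (w*z)"
    proof
      assume h: "int m dvd (w*z)"
      have "int m dvd u"
        by (rule lc3[OF h E z, where p="(1-w)*w^2" and q="(1-w)^2*z" and r="-1"]) (simp add: algebra_simps eval_nat_numeral)
      then show False using nu by simp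
    qed
    have "odd (Pf (int m) (w*z) + Pf (int m) (w*z+1))" by (rule Pf_step[OF m1 modd nd])
    then show "odd (AA 0 1 i0 - AA 0 1 i1)" unfolding A0 A1 P0 P1 by presburger
  qed
  then show ?thesis using i0(1) i1(1) d0 d1 by blast
qed

lemma H2_01: "i < 2*m \<Longrightarrow> int m dvd GG 0 1 i \<Longrightarrow> odd (AA 0 1 i)"
proof -
  assume i: "i < 2*m" and d: "int m dvd GG 0 1 i"
  define s where "s = int (i div m)"
  define t where "t = int (i mod m)"
  have s01: "s = 0 \<or> s = 1" using S01[OF i] s_def by simp
  have "GG 0 1 i = (1-w)*(t - s)" unfolding GG_def gg_def s_def[symmetric] t_def[symmetric] by (simp add: algebra_simps eval_nat_numeral)
  then have "int m dvd (t - s)" using d coprime_dvd_mult_right_iff[OF cop'] by metis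
  then have "Pf (int m) (w*t + (1-w)*s) = Pf (int m) s"
    by (intro Pf_cong, rule lc1[where p=w]) (simp add: algebra_simps eval_nat_numeral)
  moreover have "AA 0 1 i = - Pf (int m) (w*t + (1-w)*s)" unfolding AA_def aa_def gg_def s_def[symmetric] t_def[symmetric] by simp
  ultimately show ?thesis using Pfs[OF s01] by simp
qed

lemma H1_02: "\<exists>i0<2*m. \<exists>i1<2*m. int m dvd (GG 0 2 i0 - u) \<and> int m dvd (GG 0 2 i1 - u) \<and> (\<not> int m dvd u \<longrightarrow> odd (AA 0 2 i0 - AA 0 2 i1))"
proof -
  obtain z where z: "int m dvd ((1-w)*z - (u + (1-w)))" using solve[OF cop] by blast
  define x where "x = - w * z"
  have K: "int m dvd ((1-w^2)*x - (1-w) - u)"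
    unfolding x_def by (rule lc2[OF z E, where p=1 and q="-(1-w)*z"]) (simp add: algebra_simps eval_nat_numeral)
  obtain i0 where i0: "i0 < 2*m" "int (i0 div m) = 0" "int m dvd (int (i0 mod m) - x)" using row[of m 0 x] mpos by auto
  obtain i1 where i1: "i1 < 2*m" "int (i1 div m) = 1" "int m dvd (int (i1 mod m) - (x+w))" using row[of m 1 "x+w"] mpos by auto
  define t0 where "t0 = int (i0 mod m)"
  define t1 where "t1 = int (i1 mod m)"
  have G0: "GG 0 2 i0 = t0 - (w^2*t0 + (1-w))" unfolding GG_def gg_def using i0 by (simp add: t0_def)
  have G1: "GG 0 2 i1 = t1 - w^2*t1" unfolding GG_def gg_def using i1 by (simp add: t1_def)
  have A0: "AA 0 2 i0 = - Pf (int m) (w^2*(w^2*t0 + (1-w)) + 1)" unfolding AA_def aa_def gg_def using i0 by (simp add: t0_def)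
  have A1: "AA 0 2 i1 = - Pf (int m) (w^2*(w^2*t1) + 1)" unfolding AA_def aa_def gg_def using i1 by (simp add: t1_def)
  have d0: "int m dvd (GG 0 2 i0 - u)" unfolding G0
    by (rule lc2[OF i0(3)[folded t0_def] K, where p="1-w^2" and q=1]) (simp add: algebra_simps eval_nat_numeral)
  have d1: "int m dvd (GG 0 2 i1 - u)" unfolding G1
    by (rule lc3[OF i1(3)[folded t1_def] K E, where p="1-w^2" and q=1 and r="-(w-1)"]) (simp add: algebra_simps eval_nat_numeral)
  have P0: "Pf (int m) (w^2*(w^2*t0 + (1-w)) + 1) = Pf (int m) (w*x + w^2)"
    by (rule Pf_cong, rule lc2[OF i0(3)[folded t0_def] E, where p="w^4" and q="w*(w-1)*x - (w-1)"]) (simp add: algebra_simps eval_nat_numeral)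
  have P1: "Pf (int m) (w^2*(w^2*t1) + 1) = Pf (int m) (w*x + w^2 + 1)"
    by (rule Pf_cong, rule lc2[OF i1(3)[folded t1_def] E, where p="w^4" and q="w*(w-1)*(x+w)"]) (simp add: algebra_simps eval_nat_numeral)
  have "\<not> int m dvd u \<longrightarrow> odd (AA 0 2 i0 - AA 0 2 i1)"
  proof
    assume nu: "\<not> int m dvd u"
    have nd: "\<not> int m dvd (w*x + w^2)"
    proof
      assume h: "int m dvd (w*x + w^2)"
      have "int m dvd u"
        by (rule lc3[OF K h E, where p="-1" and q="(1-w^2)*w^2" and r="-(1-w^2)*(w-1)*(x+w) + (w-1)"]) (simp add: algebra_simps eval_nat_numeral)
      then show False using nu by simp
    qed
    have "odd (Pf (int m) (w*x + w^2) + Pf (int m) (w*x + w^2 + 1))" by (rule Pf_step[OF m1 modd nd])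
    then show "odd (AA 0 2 i0 - AA 0 2 i1)" unfolding A0 A1 P0 P1 by presburger
  qed
  then show ?thesis using i0(1) i1(1) d0 d1 by blast
qed

lemma H2_02: "i < 2*m \<Longrightarrow> int m dvd GG 0 2 i \<Longrightarrow> odd (AA 0 2 i)"
proof -
  assume i: "i < 2*m" and d: "int m dvd GG 0 2 i"
  define s where "s = int (i div m)"
  define t where "t = int (i mod m)"
  have s01: "s = 0 \<or> s = 1" using S01[OF i] s_def by simp
  have "GG 0 2 i = (1-w)*((1+w)*t - (1-s))" unfolding GG_def gg_def s_def[symmetric] t_def[symmetric] by (simp add: algebra_simps eval_nat_numeral)
  then have R: "int m dvd ((1+w)*t - (1-s))" using d coprime_dvd_mult_right_iff[OF cop'] by metis
  have "Pf (int m) (w^2*(w^2*t + (1-w)*(1-s)) + 1) = Pf (int m) s"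
    by (intro Pf_cong, rule lc2[OF R E, where p="-(w^2)" and q="w^2*t - (w-1)*(1-s)"]) (simp add: algebra_simps eval_nat_numeral)
  moreover have "AA 0 2 i = - Pf (int m) (w^2*(w^2*t + (1-w)*(1-s)) + 1)" unfolding AA_def aa_def gg_def s_def[symmetric] t_def[symmetric] by simp
  ultimately show ?thesis using Pfs[OF s01] by simp
qed

lemma H1_12: "\<exists>i0<2*m. \<exists>i1<2*m. int m dvd (GG 1 2 i0 - u) \<and> int m dvd (GG 1 2 i1 - u) \<and> (\<not> int m dvd u \<longrightarrow> odd (AA 1 2 i0 - AA 1 2 i1))"
proof -
  obtain z where z: "int m dvd ((1-w)*z - (u + (1-w)))" using solve[OF cop] by blast
  define x where "x = w^2 * z"
  have K: "int m dvd ((w-w^2)*x - (1-w) - u)"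
    unfolding x_def by (rule lc2[OF z E, where p=1 and q="(1-w)*(w-1)*z"]) (simp add: algebra_simps eval_nat_numeral)
  obtain i0 where i0: "i0 < 2*m" "int (i0 div m) = 0" "int m dvd (int (i0 mod m) - x)" using row[of m 0 x] mpos by auto
  obtain i1 where i1: "i1 < 2*m" "int (i1 div m) = 1" "int m dvd (int (i1 mod m) - (x - 2*w^2))" using row[of m 1 "x - 2*w^2"] mpos by auto
  define t0 where "t0 = int (i0 mod m)"
  define t1 where "t1 = int (i1 mod m)"
  have G0: "GG 1 2 i0 = w*t0 - (w^2*t0 + (1-w))" unfolding GG_def gg_def using i0 by (simp add: t0_def)
  have G1: "GG 1 2 i1 = (w*t1 + (1-w)) - w^2*t1" unfolding GG_def gg_def using i1 by (simp add: t1_def)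
  have A0: "AA 1 2 i0 = Pf (int m) (w*t0) - Pf (int m) (w^2*(w^2*t0 + (1-w)) + 1)" unfolding AA_def aa_def gg_def using i0 by (simp add: t0_def)
  have A1: "AA 1 2 i1 = Pf (int m) (w*t1 + (1-w)) - Pf (int m) (w^2*(w^2*t1) + 1)" unfolding AA_def aa_def gg_def using i1 by (simp add: t1_def)
  have d0: "int m dvd (GG 1 2 i0 - u)" unfolding G0
    by (rule lc2[OF i0(3)[folded t0_def] K, where p="w-w^2" and q=1]) (simp add: algebra_simps eval_nat_numeral)
  have d1: "int m dvd (GG 1 2 i1 - u)" unfolding G1
    by (rule lc3[OF i1(3)[folded t1_def] K E, where p="w-w^2" and q=1 and r="2*(1-w)^2"]) (simp add: algebra_simps eval_nat_numeral)
  have P0a: "Pf (int m) (w*t0) = Pf (int m) (w*x)"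
    by (rule Pf_cong, rule lc1[OF i0(3)[folded t0_def], where p=w]) (simp add: algebra_simps eval_nat_numeral)
  have P0b: "Pf (int m) (w^2*(w^2*t0 + (1-w)) + 1) = Pf (int m) (w*x + w^2)"
    by (rule Pf_cong, rule lc2[OF i0(3)[folded t0_def] E, where p="w^4" and q="w*(w-1)*x - (w-1)"]) (simp add: algebra_simps eval_nat_numeral)
  have P1a: "Pf (int m) (w*t1 + (1-w)) = Pf (int m) (w*x + w^2)"
    by (rule Pf_cong, rule lc2[OF i1(3)[folded t1_def] E, where p="w" and q="-2*(w-1) - 1"]) (simp add: algebra_simps eval_nat_numeral)
  have P1b: "Pf (int m) (w^2*(w^2*t1) + 1) = Pf (int m) (w*x - 1)"
    by (rule Pf_cong, rule lc2[OF i1(3)[folded t1_def] E, where p="w^4" and q="w*(w-1)*x - 2*(w^3+1)*(w-1)"]) (simp add: algebra_simps eval_nat_numeral)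
  have "\<not> int m dvd u \<longrightarrow> odd (AA 1 2 i0 - AA 1 2 i1)"
  proof
    assume nu: "\<not> int m dvd u"
    have nd: "\<not> int m dvd (w*x - 1)"
    proof
      assume h: "int m dvd (w*x - 1)"
      have "int m dvd u"
        by (rule lc2[OF K h, where p="-1" and q="1-w"]) (simp add: algebra_simps eval_nat_numeral)
      then show False using nu by simp
    qed
    have "odd (Pf (int m) (w*x - 1) + Pf (int m) (w*x - 1 + 1))" by (rule Pf_step[OF m1 modd nd])
    then have "odd (Pf (int m) (w*x - 1) + Pf (int m) (w*x))" by simp
    then show "odd (AA 1 2 i0 - AA 1 2 i1)" unfolding A0 A1 P0a P0b P1a P1b by presburger
  qed
  then show ?thesis using i0(1) i1(1) d0 d1 by blast
qed

lemma Pfw: "Pf (int m) (-w) = 0" by (rule Pf_negw[OF w0 wm wodd modd])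

lemma H2_12: "i < 2*m \<Longrightarrow> int m dvd GG 1 2 i \<Longrightarrow> odd (AA 1 2 i)"
proof -
  assume i: "i < 2*m" and d: "int m dvd GG 1 2 i"
  define s where "s = int (i div m)"
  define t where "t = int (i mod m)"
  have s01: "s = 0 \<or> s = 1" using S01[OF i] s_def by simp
  have "GG 1 2 i = (1-w)*(w*t + 2*s - 1)" unfolding GG_def gg_def s_def[symmetric] t_def[symmetric] by (simp add: algebra_simps eval_nat_numeral)
  then have R: "int m dvd (w*t + 2*s - 1)" using d coprime_dvd_mult_right_iff[OF cop'] by metis
  have AAe: "AA 1 2 i = Pf (int m) (w*t + (1-w)*s) - Pf (int m) (w^2*(w^2*t + (1-w)*(1-s)) + 1)"
    unfolding AA_def aa_def gg_def s_def[symmetric] t_def[symmetric] by simp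
  show ?thesis
  proof (cases "s = 0")
    case True
    have R0: "int m dvd (w*t - 1)" using R True by simp
    have "Pf (int m) (w*t + (1-w)*s) = Pf (int m) 1"
      by (rule Pf_cong, rule lc1[OF R0, where p=1]) (simp add: True)
    moreover have "Pf (int m) (w^2*(w^2*t + (1-w)*(1-s)) + 1) = Pf (int m) (-w)"
      by (rule Pf_cong, rule lc2[OF R0 E, where p="w^3" and q=1]) (simp add: True algebra_simps eval_nat_numeral)
    ultimately show ?thesis unfolding AAe Pfw using Pf_1[OF m1] by simp
  next
    case False
    then have s1: "s = 1" using s01 by simp
    have R1: "int m dvd (w*t + 1)" using R s1 by (simp add: add.commute)
    have "Pf (int m) (w*t + (1-w)*s) = Pf (int m) (-w)"
      by (rule Pf_cong, rule lc1[OF R1, where p=1]) (simp add: s1)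
    moreover have "Pf (int m) (w^2*(w^2*t + (1-w)*(1-s)) + 1) = Pf (int m) 0"
      by (rule Pf_cong, rule lc2[OF R1 E, where p="w^3" and q="-(w-1)"]) (simp add: s1 algebra_simps eval_nat_numeral)
    ultimately show ?thesis unfolding AAe Pfw Pf_0 by simp
  qed
qed

definition GF where "GF j i = gg w j (int (i div m)) (int (i mod m))"
definition AF where "AF j i = aa (int m) w j (int (i div m)) (int (i mod m))"

lemma F0: "\<exists>i0<2*m. \<exists>i1<2*m. int m dvd (GF 0 i0 - u) \<and> int m dvd (GF 0 i1 - u) \<and> odd (AF 0 i0 - AF 0 i1)"
proof -
  obtain i0 where i0: "i0 < 2*m" "int (i0 div m) = 0" "int m dvd (int (i0 mod m) - u)" using row[of m 0 u] mpos by auto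
  obtain i1 where i1: "i1 < 2*m" "int (i1 div m) = 1" "int m dvd (int (i1 mod m) - u)" using row[of m 1 u] mpos by auto
  have "GF 0 i0 = int (i0 mod m)" "GF 0 i1 = int (i1 mod m)" "AF 0 i0 = 0" "AF 0 i1 = 1"
    unfolding GF_def AF_def gg_def aa_def using i0 i1 by simp_all
  then show ?thesis using i0 i1 by fastforce
qed

lemma F1: "\<exists>i0<2*m. \<exists>i1<2*m. int m dvd (GF 1 i0 - u) \<and> int m dvd (GF 1 i1 - u) \<and> odd (AF 1 i0 - AF 1 i1)"
proof -
  obtain i0 where i0: "i0 < 2*m" "int (i0 div m) = 0" "int m dvd (int (i0 mod m) - w^2*u)" using row[of m 0 "w^2*u"] mpos by auto
  obtain i1 where i1: "i1 < 2*m" "int (i1 div m) = 1" "int m dvd (int (i1 mod m) - w^2*(u-1+w))" using row[of m 1 "w^2*(u-1+w)"] mpos by auto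
  define t0 where "t0 = int (i0 mod m)"
  define t1 where "t1 = int (i1 mod m)"
  have G0: "GF 1 i0 = w*t0" unfolding GF_def gg_def using i0 by (simp add: t0_def)
  have G1: "GF 1 i1 = w*t1 + (1-w)" unfolding GF_def gg_def using i1 by (simp add: t1_def)
  have A0: "AF 1 i0 = Pf (int m) (w*t0)" unfolding AF_def aa_def gg_def using i0 by (simp add: t0_def)
  have A1: "AF 1 i1 = 1 + Pf (int m) (w*t1 + (1-w))" unfolding AF_def aa_def gg_def using i1 by (simp add: t1_def)
  have d0: "int m dvd (GF 1 i0 - u)" unfolding G0
    by (rule lc2[OF i0(3)[folded t0_def] E, where p=w and q="(w-1)*u"]) (simp add: algebra_simps eval_nat_numeral)
  have d1: "int m dvd (GF 1 i1 - u)" unfolding G1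
    by (rule lc2[OF i1(3)[folded t1_def] E, where p=w and q="(w-1)*(u-1+w)"]) (simp add: algebra_simps eval_nat_numeral)
  have "Pf (int m) (w*t0) = Pf (int m) (w*t1 + (1-w))"
    by (rule Pf_cong, rule dvd_both[OF d0[unfolded G0] d1[unfolded G1]])
  then have "odd (AF 1 i0 - AF 1 i1)" unfolding A0 A1 by simp
  then show ?thesis using i0(1) i1(1) d0 d1 by blast
qed

lemma F2: "\<exists>i0<2*m. \<exists>i1<2*m. int m dvd (GF 2 i0 - u) \<and> int m dvd (GF 2 i1 - u) \<and> odd (AF 2 i0 - AF 2 i1)"
proof -
  obtain i0 where i0: "i0 < 2*m" "int (i0 div m) = 0" "int m dvd (int (i0 mod m) - w*(u-1+w))" using row[of m 0 "w*(u-1+w)"] mpos by auto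
  obtain i1 where i1: "i1 < 2*m" "int (i1 div m) = 1" "int m dvd (int (i1 mod m) - w*u)" using row[of m 1 "w*u"] mpos by auto
  define t0 where "t0 = int (i0 mod m)"
  define t1 where "t1 = int (i1 mod m)"
  have G0: "GF 2 i0 = w^2*t0 + (1-w)" unfolding GF_def gg_def using i0 by (simp add: t0_def)
  have G1: "GF 2 i1 = w^2*t1" unfolding GF_def gg_def using i1 by (simp add: t1_def)
  have A0: "AF 2 i0 = Pf (int m) (w^2*(w^2*t0 + (1-w)) + 1)" unfolding AF_def aa_def gg_def using i0 by (simp add: t0_def)
  have A1: "AF 2 i1 = 1 + Pf (int m) (w^2*(w^2*t1) + 1)" unfolding AF_def aa_def gg_def using i1 by (simp add: t1_def)
  have d0: "int m dvd (GF 2 i0 - u)" unfolding G0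
    by (rule lc2[OF i0(3)[folded t0_def] E, where p="w^2" and q="(w-1)*(u-1+w)"]) (simp add: algebra_simps eval_nat_numeral)
  have d1: "int m dvd (GF 2 i1 - u)" unfolding G1
    by (rule lc2[OF i1(3)[folded t1_def] E, where p="w^2" and q="(w-1)*u"]) (simp add: algebra_simps eval_nat_numeral)
  have dd: "int m dvd ((w^2*t0 + (1-w)) - w^2*t1)" by (rule dvd_both[OF d0[unfolded G0] d1[unfolded G1]])
  have "Pf (int m) (w^2*(w^2*t0 + (1-w)) + 1) = Pf (int m) (w^2*(w^2*t1) + 1)"
    by (rule Pf_cong, rule lc1[OF dd, where p="w^2"]) (simp add: algebra_simps)
  then have "odd (AF 2 i0 - AF 2 i1)" unfolding A0 A1 by simp
  then show ?thesis using i0(1) i1(1) d0 d1 by blast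
qed

lemma QD: "i < 2*m \<Longrightarrow> j < 3 \<Longrightarrow> int m dvd (QQ m w i j - GF j i)"
  unfolding QQ_def GF_def using enc_modm by simp
lemma Q2: "i < 2*m \<Longrightarrow> j < 3 \<Longrightarrow> 2 dvd (QQ m w i j - AF j i)"
  unfolding QQ_def AF_def using enc_mod2[OF modd] by simp
lemma Qrange: "0 \<le> QQ m w i j \<and> QQ m w i j < 2 * int m"
  unfolding QQ_def using enc_range[of "int m"] m1 by auto
lemma Qz1: "QQ m w (2*m) j = 0" unfolding QQ_def by simp
lemma Qz2: "QQ m w i 3 = 0" unfolding QQ_def by simp

lemma pairgen:
  assumes jk: "j < 3" "k < 3"
  and H1: "\<And>u. \<exists>i0<2*m. \<exists>i1<2*m. int m dvd (GG j k i0 - u) \<and> int m dvd (GG j k i1 - u) \<and> (\<not> int m dvd u \<longrightarrow> odd (AA j k i0 - AA j k i1))"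
  and H2: "\<And>i. i < 2*m \<Longrightarrow> int m dvd GG j k i \<Longrightarrow> odd (AA j k i)"
  shows "(\<lambda>i. (QQ m w i j - QQ m w i k) mod (2*int m)) ` {..<2*m} = {1..<2*int m}"
    "(\<lambda>i. (QQ m w i k - QQ m w i j) mod (2*int m)) ` {..<2*m} = {1..<2*int m}"
proof -
  have N: "int (2*m) = 2 * int m" by simp
  have DG: "\<And>i. i < 2*m \<Longrightarrow> int m dvd ((QQ m w i j - QQ m w i k) - GG j k i)"
  proof -
    fix i assume i: "i < 2*m"
    have "int m dvd ((QQ m w i j - GF j i) - (QQ m w i k - GF k i))" using QD[OF i jk(1)] QD[OF i jk(2)] by (rule dvd_diff)
    then show "int m dvd ((QQ m w i j - QQ m w i k) - GG j k i)" unfolding GG_def GF_def by (simp add: algebra_simps)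
  qed
  have DA: "\<And>i. i < 2*m \<Longrightarrow> 2 dvd ((QQ m w i j - QQ m w i k) - AA j k i)"
  proof -
    fix i assume i: "i < 2*m"
    have "2 dvd ((QQ m w i j - AF j i) - (QQ m w i k - AF k i))" using Q2[OF i jk(1)] Q2[OF i jk(2)] by (rule dvd_diff)
    then show "2 dvd ((QQ m w i j - QQ m w i k) - AA j k i)" unfolding AA_def AF_def by (simp add: algebra_simps)
  qed
  show "(\<lambda>i. (QQ m w i j - QQ m w i k) mod (2*int m)) ` {..<2*m} = {1..<2*int m}"
    by (rule core_pair[OF m1 modd N, where G="GG j k" and A="AA j k"]) (use DG DA H1 H2 in auto)
  have "(\<lambda>i. (- (QQ m w i j - QQ m w i k)) mod (2*int m)) ` {..<2*m} = {1..<2*int m}"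
    by (rule core_pair_neg[OF m1 modd N, where G="GG j k" and A="AA j k"]) (use DG DA H1 H2 in auto)
  then show "(\<lambda>i. (QQ m w i k - QQ m w i j) mod (2*int m)) ` {..<2*m} = {1..<2*int m}" by simp
qed

lemma P2all: "j < 3 \<Longrightarrow> k < 3 \<Longrightarrow> j \<noteq> k \<Longrightarrow> (\<lambda>i. (QQ m w i j - QQ m w i k) mod (2*int m)) ` {..<2*m} = {1..<2*int m}"
proof -
  assume a: "j < 3" "k < 3" "j \<noteq> k"
  note p01 = pairgen[of 0 1, OF _ _ H1_01 H2_01]
  note p02 = pairgen[of 0 2, OF _ _ H1_02 H2_02]
  note p12 = pairgen[of 1 2, OF _ _ H1_12 H2_12]
  have "(j = 0 \<and> k = 1) \<or> (j = 1 \<and> k = 0) \<or> (j = 0 \<and> k = 2) \<or> (j = 2 \<and> k = 0) \<or> (j = 1 \<and> k = 2) \<or> (j = 2 \<and> k = 1)"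
    using a by auto
  then show ?thesis using p01 p02 p12 by auto
qed

lemma fullgen:
  assumes j: "j < 3"
  and H1: "\<And>u. \<exists>i0<2*m. \<exists>i1<2*m. int m dvd (GF j i0 - u) \<and> int m dvd (GF j i1 - u) \<and> odd (AF j i0 - AF j i1)"
  and g: "0 \<le> g" "g < 2 * int m"
  shows "\<exists>i<2*m. QQ m w i j mod (2*int m) = g" "\<exists>i<2*m. (- QQ m w i j) mod (2*int m) = g"
proof -
  have N: "int (2*m) = 2 * int m" by simp
  have DG: "\<And>i. i < 2*m \<Longrightarrow> int m dvd (QQ m w i j - GF j i)" using QD j by blast
  have DA: "\<And>i. i < 2*m \<Longrightarrow> 2 dvd (QQ m w i j - AF j i)" using Q2 j by blast
  show "\<exists>i<2*m. QQ m w i j mod (2*int m) = g"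
    using core_full[OF m1 modd N DG DA H1 g] by blast
  define g' where "g' = (- g) mod (2*int m)"
  have g': "0 \<le> g'" "g' < 2*int m" unfolding g'_def using m1 by auto
  obtain i where i: "i < 2*m" "(- QQ m w i j) mod (2*int m) = (- g') mod (2*int m)"
    using core_full[OF m1 modd N DG DA H1 g'] by blast
  have "(- g') mod (2*int m) = g"
    unfolding g'_def using g by (metis mod_minus_eq minus_minus mod_pos_pos_trivial)
  then show "\<exists>i<2*m. (- QQ m w i j) mod (2*int m) = g" using i by auto
qed

lemma Fall: "j < 3 \<Longrightarrow> 0 \<le> g \<Longrightarrow> g < 2 * int m \<Longrightarrow> (\<exists>i<2*m. QQ m w i j mod (2*int m) = g) \<and> (\<exists>i<2*m. (- QQ m w i j) mod (2*int m) = g)"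
proof -
  assume a: "j < 3" "0 \<le> g" "g < 2 * int m"
  then have "j = 0 \<or> j = 1 \<or> j = 2" by auto
  then show ?thesis using fullgen[of 0, OF _ F0] fullgen[of 1, OF _ F1] fullgen[of 2, OF _ F2] a by auto
qed

end

theorem mainTheorem2:
  fixes f m :: nat
  assumes "gcd f (2 * m) = 2"
    and "gcd (f + 2) (2 * m) = 2"
    and "(f ^ 2 + f + 1) mod (2 * m) = m mod (2 * m)"
    and "m + 3 \<le> f" and "f \<le> 2 * m - 4"
  shows "\<exists>Q. is_cyclic_DCA 4 (2 * m + 1) (2 * m) Q \<and> DCA_normalized 4 (2 * m) Q
             \<and> DCA_P1 4 (2 * m) Q \<and> DCA_P2 4 (2 * m) Q"
proof -
  define M where "M = int m"
  define F where "F = int f"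
  define w where "w = F - M"
  have f2: "2 dvd f" using assms(1) by (metis gcd_dvd1)
  have m7: "m \<ge> 7" using assms(4,5) by linarith
  have h3: "2*M dvd (F^2 + F + 1 - M)"
  proof -
    have "int ((f^2+f+1) mod (2*m)) = int (m mod (2*m))" using assms(3) by simp
    then have "(F^2+F+1) mod (2*M) = M mod (2*M)" unfolding F_def M_def by (simp add: of_nat_mod ac_simps)
    then show ?thesis by (simp only: mod_eq_dvd_iff)
  qed
  have Md: "M dvd (F^2+F+1-M)" using h3 dvd_mult_right by blast
  have h2: "2 dvd (F^2+F+1-M)" using h3 dvd_mult_left by blast
  obtain k where k: "f = 2*k" using f2 by (rule dvdE)
  define a where "a = int k"
  have a: "F = 2*a" unfolding F_def a_def k by simp
  have "F^2+F+1-M = 2*(2*a^2 + a) + (1 - M)" using a by (simp add: power2_eq_square algebra_simps)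
  then have "2 dvd (2*(2*a^2 + a) + (1 - M))" using h2 by simp
  then have "2 dvd (1 - M)" by simp
  then have Modd: "odd M" by presburger
  have E: "M dvd (w^2+w+1)"
    by (rule lc2[OF Md dvd_refl, where p=1 and q="M - 2*F"]) (simp add: w_def algebra_simps power2_eq_square)
  have Fb: "F \<ge> M + 3" "F \<le> 2*M - 4" using assms(4,5) m7 unfolding F_def M_def by linarith+
  have w0: "0 < w" and wm: "w < M" unfolding w_def using Fb by linarith+
  have wodd: "odd w" unfolding w_def using a Modd by presburger
  have gcd2: "gcd (F+2) (2*M) = 2"
  proof -
    have "gcd (int (f+2)) (int (2*m)) = int (gcd (f+2) (2*m))" by (rule gcd_int_int_eq)
    then show ?thesis using assms(2) unfolding F_def M_def by (simp add: ac_simps)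
  qed
  have cop: "coprime (1-w) M"
  proof (rule coprimeI)
    fix c assume c1: "c dvd (1-w)" and c2: "c dvd M"
    have cE: "c dvd (w^2+w+1)" using c2 E by (rule dvd_trans)
    have c3: "c dvd 3" by (rule lc2[OF cE c1, where p=1 and q="w+2"]) (simp add: algebra_simps power2_eq_square)
    have cf: "c dvd (F + 2)" by (rule lc3[OF c1 c2 c3, where p="-1" and q=1 and r=1]) (simp add: w_def)
    have c2M: "c dvd 2*M" using c2 by simp
    have c2': "c dvd 2" using gcd_greatest[OF cf c2M] gcd2 by simp
    have "c dvd 1" by (rule lc2[OF c3 c2', where p=1 and q="-1"]) simp
    then show "is_unit c" by simp
  qed
  interpret ctx m w
    by unfold_locales (use m7 Modd E cop wodd w0 wm in \<open>simp_all add: M_def\<close>)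
  have N2: "int (2*m) = 2 * int m" by simp
  show ?thesis
  proof (intro exI[of _ "QQ m w"] conjI)
    show "is_cyclic_DCA 4 (2*m+1) (2*m) (QQ m w)"
      unfolding is_cyclic_DCA_def
    proof (intro conjI allI impI ballI)
      fix i j assume "i < 2*m+1" "j < (4::nat)"
      show "QQ m w i j \<in> {0..<int (2*m)}" using Qrange by simp
    next
      fix j j' :: nat and g assume j: "j < 4" and j': "j' < 4" and ne: "j \<noteq> j'" and g: "g \<in> {0..<int (2*m)}"
      show "\<exists>i<2*m+1. (QQ m w i j - QQ m w i j') mod int (2*m) = g"
      proof (cases "g = 0")
        case True
        then show ?thesis using Qz1 by (intro exI[of _ "2*m"]) simp
      next
        case False
        then have g1: "g \<in> {1..<2*int m}" using g by auto
        consider "j < 3 \<and> j' < 3" | "j' = 3" | "j = 3" using j j' ne by linarith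
        then show ?thesis
        proof cases
          case 1
          then have "g \<in> (\<lambda>i. (QQ m w i j - QQ m w i j') mod (2*int m)) ` {..<2*m}"
            using P2all[of j j'] ne g1 by simp
          then obtain i where i: "i < 2*m" "(QQ m w i j - QQ m w i j') mod (2*int m) = g" by auto
          then show ?thesis by (intro exI[of _ i]) (simp add: N2)
        next
          case 2
          then have "j < 3" using j ne by simp
          then obtain i where "i < 2*m" "QQ m w i j mod (2*int m) = g" using Fall[of j g] g1 by auto
          then show ?thesis using 2 Qz2 by (intro exI[of _ i]) (simp add: N2)
        next
          case 3
          then have "j' < 3" using j' ne by simp
          then obtain i where "i < 2*m" "(- QQ m w i j') mod (2*int m) = g" using Fall[of j' g] g1 by auto
          then show ?thesis using 3 Qz2 by (intro exI[of _ i]) (simp add: N2)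
        qed
      qed
    qed
  next
    show "DCA_normalized 4 (2*m) (QQ m w)" unfolding DCA_normalized_def using Qz1 Qz2 by simp
  next
    show "DCA_P1 4 (2*m) (QQ m w)" unfolding DCA_P1_def
    proof (intro allI impI)
      fix j :: nat assume j: "j < 4"
      have fin: "finite {i. i \<le> 2*m \<and> QQ m w i j = 0}" by simp
      obtain i where i: "i < 2*m" "QQ m w i j = 0"
      proof (cases "j = 3")
        case True
        then show ?thesis using that[of 0] Qz2 mpos by simp
      next
        case False
        then have "j < 3" using j by simp
        then obtain i where i: "i < 2*m" "QQ m w i j mod (2*int m) = 0" using Fall[of j 0] mpos by auto
        then have "QQ m w i j = 0" using Qrange[of i j] by (simp add: mod_pos_pos_trivial)
        then show ?thesis using that i by blast
      qed
      have sub: "{i, 2*m} \<subseteq> {i. i \<le> 2*m \<and> QQ m w i j = 0}" using i Qz1 by auto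
      have c2: "card {i, 2*m} = 2" using i by simp
      have "card {i, 2*m} \<le> card {i. i \<le> 2*m \<and> QQ m w i j = 0}" by (rule card_mono[OF fin sub])
      then show "2 \<le> card {i. i \<le> 2*m \<and> QQ m w i j = 0}" using c2 by simp
    qed
  next
    show "DCA_P2 4 (2*m) (QQ m w)" unfolding DCA_P2_def
    proof (intro allI impI)
      fix j j' :: nat assume "j < 4" "j' < 4" "j \<noteq> j'" "j \<noteq> 4 - 1" "j' \<noteq> 4 - 1"
      then have "j < 3" "j' < 3" "j \<noteq> j'" by auto
      then show "(\<lambda>i. (QQ m w i j - QQ m w i j') mod int (2*m)) ` {..<2*m} = {1..<int (2*m)}"
        unfolding N2 by (rule P2all)
    qed
  qed
qed

end
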